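(* Fix $0<p<1$ and let $W:L^2(\mu_p)\oplus L^2(\mu_p)\to L^2(\mu_p)$, $W(f,g)=U_0f+U_2g$. Then $W$ is unitary and $$W^*K_\infty W=\begin{pmatrix}pK_\infty+pP_\phi&\sqrt{p(1-p)}P_\phi\\ \sqrt{p(1-p)}P_\phi&(1-p)K_\infty+(1-p)P_\phi\end{pmatrix}.$$
   Context: Let $S_0(x)=x/3$, $S_2(x)=(x+2)/3$ on $[0,1]$ and let $C$ be the middle-third Cantor set. For $0<p<1$, $\mu_p$ is the unique Borel probability measure on $[0,1]$ with $\mu_p=p\,\mu_p\circ S_0^{-1}+(1-p)\,\mu_p\circ S_2^{-1}$. For words $w\in\{0,2\}^n$, $S_w=S_{w_1}\circ\cdots\circ S_{w_n}$, $C_w=S_w(C)$. Inner product $\langle f,g\rangle=\int\overline fg\,d\mu_p$; $\phi=1_C$ and $P_\phi f=\langle\phi,f\rangle\phi$. $K_mf=\sum_{|u|\le m}\langle1_{C_u},f\rangle1_{C_u}$ and $K_\infty=\lim_{m\to\infty}K_m$ in operator norm (this limit exists). $(U_0f)(x)=p^{-1/2}1_{C_0}(x)f(S_0^{-1}(x))$, $(U_2f)(x)=(1-p)^{-1/2}1_{C_2}(x)f(S_2^{-1}(x))$. *)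

theory Defs
  imports "HOL-Probability.Probability"
begin

definition S :: "nat \<Rightarrow> real \<Rightarrow> real" where
  "S d x = (x + real d) / 3"

fun Sw :: "nat list \<Rightarrow> real \<Rightarrow> real" where
  "Sw [] = id"
| "Sw (d # w) = S d \<circ> Sw w"

definition words :: "nat \<Rightarrow> nat list set" where
  "words n = {w. length w = n \<and> set w \<subseteq> {0, 2}}"

definition cantor :: "real set" where
  "cantor = (\<Inter>n. \<Union>w\<in>words n. Sw w ` {0..1})"

definition cyl :: "nat list \<Rightarrow> real set" where
  "cyl w = Sw w ` cantor"

definition is_mu :: "real \<Rightarrow> real measure \<Rightarrow> bool" where
  "is_mu p M \<longleftrightarrow> prob_space M \<and> space M = {0..1} \<and>
     sets M = sets (restrict_space borel {0..1::real}) \<and>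
     (\<forall>A\<in>sets M. emeasure M A =
        ennreal p * emeasure M (S 0 -` A \<inter> space M)
      + ennreal (1 - p) * emeasure M (S 2 -` A \<inter> space M))"

text \<open>Complex L^2(M) (as functions; equality is up to a.e.)\<close>
definition L2 :: "real measure \<Rightarrow> (real \<Rightarrow> complex) set" where
  "L2 M = {f. f \<in> borel_measurable M \<and> integrable M (\<lambda>x. (cmod (f x))\<^sup>2)}"

definition ip :: "real measure \<Rightarrow> (real \<Rightarrow> complex) \<Rightarrow> (real \<Rightarrow> complex) \<Rightarrow> complex" where
  "ip M f g = (LINT x|M. cnj (f x) * g x)"

definition L2norm :: "real measure \<Rightarrow> (real \<Rightarrow> complex) \<Rightarrow> real" where
  "L2norm M f = sqrt (LINT x|M. (cmod (f x))\<^sup>2)"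

definition ind :: "real set \<Rightarrow> real \<Rightarrow> complex" where
  "ind A x = (if x \<in> A then 1 else 0)"

definition Pphi :: "real measure \<Rightarrow> (real \<Rightarrow> complex) \<Rightarrow> real \<Rightarrow> complex" where
  "Pphi M f x = ip M (ind cantor) f * ind cantor x"

definition Km :: "real measure \<Rightarrow> nat \<Rightarrow> (real \<Rightarrow> complex) \<Rightarrow> real \<Rightarrow> complex" where
  "Km M m f x = (\<Sum>u\<in>{u. length u \<le> m \<and> set u \<subseteq> {0, 2}}. ip M (ind (cyl u)) f * ind (cyl u) x)"

text \<open>U_0 f x = p^(-1/2) 1_{C_0}(x) f(S_0^{-1} x), U_2 f x = (1-p)^(-1/2) 1_{C_2}(x) f(S_2^{-1} x)\<close>
definition U0 :: "real \<Rightarrow> (real \<Rightarrow> complex) \<Rightarrow> real \<Rightarrow> complex" where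
  "U0 p f x = complex_of_real (1 / sqrt p) * ind (cyl [0]) x * f (3 * x)"

definition U2 :: "real \<Rightarrow> (real \<Rightarrow> complex) \<Rightarrow> real \<Rightarrow> complex" where
  "U2 p f x = complex_of_real (1 / sqrt (1 - p)) * ind (cyl [2]) x * f (3 * x - 2)"

definition Wop :: "real \<Rightarrow> (real \<Rightarrow> complex) \<Rightarrow> (real \<Rightarrow> complex) \<Rightarrow> real \<Rightarrow> complex" where
  "Wop p f g x = U0 p f x + U2 p g x"

end

theory Submission
  imports Defs
begin


definition Lv :: "nat \<Rightarrow> real set" where
  "Lv n = (\<Union>w\<in>words n. Sw w ` {0..1})"

lemma cantor_Lv: "cantor = (\<Inter>n. Lv n)"
  unfolding cantor_def Lv_def by simp

lemma S_img: "x \<in> S d ` A \<longleftrightarrow> 3 * x - real d \<in> A"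
proof
  assume "x \<in> S d ` A" then obtain y where "y \<in> A" "x = (y + real d)/3" by (auto simp: S_def)
  then have "3 * x - real d = y" by simp
  then show "3 * x - real d \<in> A" using \<open>y \<in> A\<close> by simp
next
  assume "3 * x - real d \<in> A"
  moreover have "x = S d (3 * x - real d)" by (simp add: S_def)
  ultimately show "x \<in> S d ` A" by blast
qed

lemma S_inv[simp]: "3 * S d y - real d = y" unfolding S_def by (simp add: field_simps)

lemma Lv_0: "Lv 0 = {0..1}"
  unfolding Lv_def words_def by auto

lemma words_Suc: "words (Suc n) = Cons 0 ` words n \<union> Cons 2 ` words n"
proof
  show "words (Suc n) \<subseteq> Cons 0 ` words n \<union> Cons 2 ` words n"
  proof
    fix w assume "w \<in> words (Suc n)"
    then obtain d v where w: "w = d # v" "length v = n" "d \<in> {0,2}" "set v \<subseteq> {0,2}"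
      unfolding words_def by (auto simp: length_Suc_conv)
    then show "w \<in> Cons 0 ` words n \<union> Cons 2 ` words n" unfolding words_def by auto
  qed
qed (auto simp: words_def)

lemma Lv_Suc: "Lv (Suc n) = S 0 ` Lv n \<union> S 2 ` Lv n"
  unfolding Lv_def words_Suc by (simp add: image_Un UN_Un image_UN image_comp)

lemma Lv_sub: "Lv n \<subseteq> {0..1}"
proof (induction n)
  case 0 then show ?case by (simp add: Lv_0)
next
  case (Suc n)
  show ?case unfolding Lv_Suc using Suc by (auto simp: S_def)
qed

lemma Lv_borel: "Lv n \<in> sets borel"
proof (induction n)
  case 0 then show ?case by (simp add: Lv_0)
next
  case (Suc n)
  have e: "S d ` Lv n = (\<lambda>x. 3 * x - real d) -` Lv n" for d
    by (auto simp: S_img)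
  have h: "(\<lambda>x::real. 3 * x - real d) -` Lv n \<in> sets borel" for d
    using measurable_sets[of "\<lambda>x::real. 3 * x - real d" borel borel "Lv n"] Suc by simp
  show ?case unfolding Lv_Suc e using h[of 0] h[of 2] by auto
qed

lemma cantor_borel: "cantor \<in> sets borel"
  unfolding cantor_Lv using Lv_borel by auto

lemma cantor_sub: "cantor \<subseteq> {0..1}"
  unfolding cantor_Lv using Lv_0 by auto

lemma S_cantor: assumes "d \<in> {0,2}" shows "S d ` cantor \<subseteq> cantor"
proof
  fix x assume "x \<in> S d ` cantor"
  then obtain y where y: "y \<in> cantor" "x = S d y" by auto
  have "x \<in> Lv n" for n
  proof (cases n)
    case 0 then show ?thesis using y cantor_sub assms by (auto simp: Lv_0 S_def)
  next
    case (Suc m)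
    have "y \<in> Lv m" using y cantor_Lv by auto
    then show ?thesis using Suc y assms by (auto simp: Lv_Suc)
  qed
  then show "x \<in> cantor" unfolding cantor_Lv by auto
qed

lemma cantor_split: "cantor \<subseteq> S 0 ` cantor \<union> S 2 ` cantor"
proof
  fix x assume x: "x \<in> cantor"
  then have x1: "x \<in> Lv (Suc 0)" unfolding cantor_Lv by auto
  have xn: "x \<in> S 0 ` Lv n \<union> S 2 ` Lv n" for n using x unfolding cantor_Lv
    by (metis INT_iff Lv_Suc UNIV_I)
  show "x \<in> S 0 ` cantor \<union> S 2 ` cantor"
  proof (cases "x \<le> 1/2")
    case True
    have "3 * x \<in> Lv n" for n
    proof -
      have "\<not> (3 * x - 2 \<in> Lv n)" using Lv_sub[of n] True by auto
      then show ?thesis using xn[of n] by (auto simp: S_img)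
    qed
    then show ?thesis unfolding cantor_Lv by (auto simp: S_img)
  next
    case False
    have "3 * x - 2 \<in> Lv n" for n
    proof -
      have "\<not> (3 * x \<in> Lv n)" using Lv_sub[of n] False by auto
      then show ?thesis using xn[of n] by (auto simp: S_img)
    qed
    then show ?thesis unfolding cantor_Lv by (auto simp: S_img)
  qed
qed

lemma cyl_Nil: "cyl [] = cantor" by (simp add: cyl_def)
lemma cyl_Cons: "cyl (d # v) = S d ` cyl v" by (simp add: cyl_def image_comp)

lemma cyl_sub: "set v \<subseteq> {0,2} \<Longrightarrow> cyl v \<subseteq> cantor"
proof (induction v)
  case Nil then show ?case by (simp add: cyl_Nil)
next
  case (Cons d v)
  then have "S d ` cyl v \<subseteq> S d ` cantor" by auto
  also have "\<dots> \<subseteq> cantor" using S_cantor Cons by auto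
  finally show ?case by (simp add: cyl_Cons)
qed

lemma cyl_borel: "cyl v \<in> sets borel"
proof (induction v)
  case Nil then show ?case by (simp add: cyl_Nil cantor_borel)
next
  case (Cons d v)
  have e: "S d ` cyl v = (\<lambda>x. 3 * x - real d) -` cyl v"
    by (auto simp: S_img)
  have "(\<lambda>x::real. 3 * x - real d) -` cyl v \<in> sets borel"
    using measurable_sets[of "\<lambda>x::real. 3 * x - real d" borel borel "cyl v"] Cons by simp
  then show ?case unfolding cyl_Cons e by auto
qed

lemma mem_cyl0: "x \<in> cyl [0] \<longleftrightarrow> 3 * x \<in> cantor"
  using S_img[of x 0 cantor] by (simp add: cyl_Cons cyl_Nil)
lemma mem_cyl2: "x \<in> cyl [2] \<longleftrightarrow> 3 * x - 2 \<in> cantor"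
  using S_img[of x 2 cantor] by (simp add: cyl_Cons cyl_Nil)

lemma cyl02_disj: "x \<in> cyl [0] \<Longrightarrow> x \<notin> cyl [2]"
proof
  assume "x \<in> cyl [0]" "x \<in> cyl [2]"
  then have "3 * x \<in> {0..1}" "3 * x - 2 \<in> {0..1}" using cantor_sub by (auto simp: mem_cyl0 mem_cyl2)
  then show False by auto
qed

lemma cantor_cyl: "x \<in> cantor \<longleftrightarrow> x \<in> cyl [0] \<or> x \<in> cyl [2]"
  using cantor_split S_cantor[of 0] S_cantor[of 2] by (auto simp: cyl_Cons cyl_Nil)




locale cm =
  fixes p :: real and M :: "real measure"
  assumes p0: "0 < p" and p1: "p < 1" and mu: "is_mu p M"
begin

lemma prob: "prob_space M" using mu by (simp add: is_mu_def)
lemma spM: "space M = {0..1}" using mu by (simp add: is_mu_def)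
lemma setsM: "sets M = sets (restrict_space borel {0..1::real})" using mu by (simp add: is_mu_def)
lemma ssA: "A \<in> sets M \<Longrightarrow> emeasure M A =
        ennreal p * emeasure M (S 0 -` A \<inter> space M) + ennreal (1 - p) * emeasure M (S 2 -` A \<inter> space M)"
  using mu by (simp add: is_mu_def)

lemma finM: "finite_measure M" using prob prob_space_def by blast

lemma measM: "f \<in> borel_measurable borel \<Longrightarrow> f \<in> borel_measurable M"
proof -
  assume "f \<in> borel_measurable borel"
  then have "f \<in> borel_measurable (restrict_space borel {0..1})" by (rule measurable_restrict_space1)
  then show ?thesis by (simp add: measurable_cong_sets[OF setsM refl])
qed

lemma setsI: "A \<in> sets borel \<Longrightarrow> A \<inter> {0..1} \<in> sets M"
  unfolding setsM by (subst sets_restrict_space_iff) auto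

lemma measMM: assumes "h \<in> borel_measurable borel" "\<And>x. x \<in> {0..1} \<Longrightarrow> h x \<in> {0..(1::real)}"
  shows "h \<in> measurable M M"
proof -
  have "h \<in> measurable (restrict_space borel {0..1}) (restrict_space borel {0..1})"
    by (rule measurable_restrict_space3) (use assms in auto)
  then show ?thesis by (simp add: measurable_cong_sets[OF setsM setsM])
qed

lemma S_borel: "S d \<in> borel_measurable borel"
proof -
  have "(\<lambda>x::real. (x + real d)/3) \<in> borel_measurable borel" by measurable
  then show ?thesis by (simp add: S_def[abs_def])
qed

lemma S_meas: "d \<in> {0,2} \<Longrightarrow> S d \<in> measurable M M"
  by (rule measMM) (auto simp: S_def S_borel)

lemma S_space: "d \<in> {0,2} \<Longrightarrow> x \<in> space M \<Longrightarrow> S d x \<in> space M"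
  by (auto simp: spM S_def)

lemma nn_ss:
  assumes g: "g \<in> borel_measurable M"
  shows "(\<integral>\<^sup>+x. g x \<partial>M) = ennreal p * (\<integral>\<^sup>+x. g (S 0 x) \<partial>M) + ennreal (1-p) * (\<integral>\<^sup>+x. g (S 2 x) \<partial>M)"
  using g
proof induct
  case (cong f g)
  have a: "(\<integral>\<^sup>+x. f x \<partial>M) = (\<integral>\<^sup>+x. g x \<partial>M)" by (rule nn_integral_cong) (use cong in auto)
  have b: "(\<integral>\<^sup>+x. f (S d x) \<partial>M) = (\<integral>\<^sup>+x. g (S d x) \<partial>M)" if "d \<in> {0,2}" for d
    by (rule nn_integral_cong) (use cong S_space[OF that] in auto)
  show ?case using cong(4) a b[of 0] b[of 2] by simp
next
  case (set A)
  have eq: "\<And>x. x \<in> space M \<Longrightarrow> indicator A (S d x) = (indicator (S d -` A \<inter> space M) x :: ennreal)" for d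
    by (auto simp: indicator_def)
  have i: "(\<integral>\<^sup>+x. indicator A (S d x) \<partial>M) = emeasure M (S d -` A \<inter> space M)" if "d \<in> {0,2}" for d
    apply (subst nn_integral_cong[OF eq], assumption)
    apply (rule nn_integral_indicator)
    using measurable_sets[OF S_meas[OF that] set] .
  show ?case using i[of 0] i[of 2] ssA[OF set] set by simp
next
  case (mult u c)
  have m: "(\<lambda>x. u (S d x)) \<in> borel_measurable M" if "d \<in> {0,2}" for d
    using measurable_compose[OF S_meas[OF that] mult(2)] .
  have "(\<integral>\<^sup>+x. c * u x \<partial>M) = c * (\<integral>\<^sup>+x. u x \<partial>M)" using mult by (simp add: nn_integral_cmult)
  moreover have "(\<integral>\<^sup>+x. c * u (S d x) \<partial>M) = c * (\<integral>\<^sup>+x. u (S d x) \<partial>M)" if "d \<in> {0,2}" for d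
    using m[OF that] by (simp add: nn_integral_cmult)
  ultimately show ?case using mult(4) by (simp add: algebra_simps)
next
  case (add u v)
  have m: "(\<lambda>x. u (S d x)) \<in> borel_measurable M" "(\<lambda>x. v (S d x)) \<in> borel_measurable M" if "d \<in> {0,2}" for d
    using measurable_compose[OF S_meas[OF that] add(1)] measurable_compose[OF S_meas[OF that] add(4)] by auto
  have "(\<integral>\<^sup>+x. v x + u x \<partial>M) = (\<integral>\<^sup>+x. v x \<partial>M) + (\<integral>\<^sup>+x. u x \<partial>M)"
    using add by (simp add: nn_integral_add)
  moreover have "(\<integral>\<^sup>+x. v (S d x) + u (S d x) \<partial>M) = (\<integral>\<^sup>+x. v (S d x) \<partial>M) + (\<integral>\<^sup>+x. u (S d x) \<partial>M)" if "d \<in> {0,2}" for d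
    using m[OF that] by (simp add: nn_integral_add)
  ultimately show ?case using add(3) add(7) by (simp add: algebra_simps)
next
  case (seq U)
  have m: "(\<lambda>x. U i (S d x)) \<in> borel_measurable M" if "d \<in> {0,2}" for d i
    using measurable_compose[OF S_meas[OF that] seq(1)] .
  have inc: "incseq (\<lambda>i x. U i (S d x))" for d using seq(4) by (auto simp: incseq_def le_fun_def)
  have "(\<integral>\<^sup>+x. (SUP i. U i) x \<partial>M) = (SUP i. \<integral>\<^sup>+x. U i x \<partial>M)"
    using seq by (simp add: nn_integral_monotone_convergence_SUP image_comp)
  moreover have "(\<integral>\<^sup>+x. (SUP i. U i) (S d x) \<partial>M) = (SUP i. \<integral>\<^sup>+x. U i (S d x) \<partial>M)" if "d \<in> {0,2}" for d
    using nn_integral_monotone_convergence_SUP[OF inc[of d] m[OF that]] by (simp add: image_comp)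
  moreover have "incseq (\<lambda>i. \<integral>\<^sup>+x. U i (S d x) \<partial>M)" for d
    using inc[of d] by (auto simp: incseq_def le_fun_def intro!: nn_integral_mono)
  ultimately show ?case using seq(3)
    by (simp add: SUP_mult_left_ennreal ennreal_SUP_add[symmetric] incseq_def mult_left_mono)
qed

end



lemma S_lin: "3 * S d y - real e = y + real d - real e" by (simp add: S_def)

lemma S_mem_S:
  assumes "d \<in> {0,2}" "e \<in> {0,2::nat}" "y \<in> {0..1}" "A \<subseteq> {0..1}"
  shows "S d y \<in> S e ` A \<longleftrightarrow> (d = e \<and> y \<in> A)"
  using assms by (auto simp: S_img S_lin subset_iff)

lemma ind_indicator: "ind A = indicator A"
  by (rule ext) (simp add: ind_def indicator_def)

lemma mem_cyl1: "x \<in> cyl [d] \<longleftrightarrow> 3 * x - real d \<in> cantor"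
  by (simp add: cyl_Cons cyl_Nil S_img)

context cm
begin

definition wt :: "nat \<Rightarrow> real" where "wt d = (if d = 0 then p else 1 - p)"

lemma int_S:
  fixes h :: "real \<Rightarrow> 'b::{banach,second_countable_topology}"
  assumes h: "integrable M h" and d: "d \<in> {0,2}"
  shows "integrable M (\<lambda>x. h (S d x))"
proof -
  have hm: "h \<in> borel_measurable M" using h by auto
  have m: "(\<lambda>x. ennreal (norm (h x))) \<in> borel_measurable M" using hm by measurable
  have fin: "(\<integral>\<^sup>+x. ennreal (norm (h x)) \<partial>M) < \<infinity>" using h by (simp add: integrable_iff_bounded)
  note e = nn_ss[OF m]
  have "ennreal (wt d) * (\<integral>\<^sup>+x. ennreal (norm (h (S d x))) \<partial>M) \<le> (\<integral>\<^sup>+x. ennreal (norm (h x)) \<partial>M)"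
    using d unfolding e wt_def by auto
  then have "ennreal (wt d) * (\<integral>\<^sup>+x. ennreal (norm (h (S d x))) \<partial>M) < \<infinity>" using fin by (meson le_less_trans)
  moreover have "wt d > 0" using p0 p1 by (simp add: wt_def)
  ultimately have "(\<integral>\<^sup>+x. ennreal (norm (h (S d x))) \<partial>M) = 0 \<or> (\<integral>\<^sup>+x. ennreal (norm (h (S d x))) \<partial>M) < \<infinity>"
    by (simp add: ennreal_mult_less_top)
  then have "(\<integral>\<^sup>+x. ennreal (norm (h (S d x))) \<partial>M) < \<infinity>" by auto
  moreover have "(\<lambda>x. h (S d x)) \<in> borel_measurable M" using measurable_compose[OF S_meas[OF d] hm] .
  ultimately show ?thesis by (simp add: integrable_iff_bounded)
qed

lemma int_ss_real:
  fixes h :: "real \<Rightarrow> real"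
  assumes h: "integrable M h"
  shows "integral\<^sup>L M h = p * integral\<^sup>L M (\<lambda>x. h (S 0 x)) + (1 - p) * integral\<^sup>L M (\<lambda>x. h (S 2 x))"
proof -
  have h0: "integrable M (\<lambda>x. h (S 0 x))" and h2: "integrable M (\<lambda>x. h (S 2 x))"
    using int_S[OF h] by auto
  have hm: "h \<in> borel_measurable M" using h by auto
  have m1: "(\<lambda>x. ennreal (h x)) \<in> borel_measurable M" using hm by measurable
  have m2: "(\<lambda>x. ennreal (- h x)) \<in> borel_measurable M" using hm by measurable
  note e1 = nn_ss[OF m1] and e2 = nn_ss[OF m2]
  define a where "a = (\<integral>\<^sup>+x. ennreal (h (S 0 x)) \<partial>M)"
  define b where "b = (\<integral>\<^sup>+x. ennreal (h (S 2 x)) \<partial>M)"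
  define a' where "a' = (\<integral>\<^sup>+x. ennreal (- h (S 0 x)) \<partial>M)"
  define b' where "b' = (\<integral>\<^sup>+x. ennreal (- h (S 2 x)) \<partial>M)"
  have fa: "a < top" "a' < top" using h0 unfolding a_def a'_def real_integrable_def by (auto simp: less_top)
  have fb: "b < top" "b' < top" using h2 unfolding b_def b'_def real_integrable_def by (auto simp: less_top)
  have E: "enn2real (ennreal p * u + ennreal (1 - p) * v) = p * enn2real u + (1 - p) * enn2real v"
    if "u < top" "v < top" for u v
    using that p0 p1 by (simp add: enn2real_plus ennreal_mult_less_top enn2real_mult)
  have "integral\<^sup>L M h = enn2real (ennreal p * a + ennreal (1 - p) * b) - enn2real (ennreal p * a' + ennreal (1 - p) * b')"
    unfolding real_lebesgue_integral_def[OF h] e1 e2 a_def b_def a'_def b'_def by simp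
  also have "\<dots> = p * (enn2real a - enn2real a') + (1 - p) * (enn2real b - enn2real b')"
    using E fa fb by (simp add: algebra_simps)
  also have "\<dots> = p * integral\<^sup>L M (\<lambda>x. h (S 0 x)) + (1 - p) * integral\<^sup>L M (\<lambda>x. h (S 2 x))"
    unfolding real_lebesgue_integral_def[OF h0] real_lebesgue_integral_def[OF h2] a_def b_def a'_def b'_def by simp
  finally show ?thesis .
qed

lemma int_ss:
  fixes h :: "real \<Rightarrow> complex"
  assumes h: "integrable M h"
  shows "integral\<^sup>L M h = of_real p * integral\<^sup>L M (\<lambda>x. h (S 0 x)) + of_real (1 - p) * integral\<^sup>L M (\<lambda>x. h (S 2 x))"
proof -
  have h0: "integrable M (\<lambda>x. h (S 0 x))" and h2: "integrable M (\<lambda>x. h (S 2 x))"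
    using int_S[OF h] by auto
  have r: "integral\<^sup>L M (\<lambda>x. Re (h x)) = p * integral\<^sup>L M (\<lambda>x. Re (h (S 0 x))) + (1 - p) * integral\<^sup>L M (\<lambda>x. Re (h (S 2 x)))"
    using int_ss_real[of "\<lambda>x. Re (h x)"] h by auto
  have i: "integral\<^sup>L M (\<lambda>x. Im (h x)) = p * integral\<^sup>L M (\<lambda>x. Im (h (S 0 x))) + (1 - p) * integral\<^sup>L M (\<lambda>x. Im (h (S 2 x)))"
    using int_ss_real[of "\<lambda>x. Im (h x)"] h by auto
  show ?thesis
    using r i h h0 h2 by (intro complex_eqI) (simp_all add: integral_Re integral_Im)
qed

lemma AE_cantor: "AE x in M. x \<in> cantor"
proof -
  define E where "E n = {0..1} - Lv n" for n
  have Es: "E n \<in> sets M" for n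
  proof -
    have "E n = (UNIV - Lv n) \<inter> {0..1}" by (auto simp: E_def)
    then show ?thesis using setsI[of "UNIV - Lv n"] Lv_borel by auto
  qed
  have pre: "S d -` E (Suc n) \<inter> space M = E n" if "d \<in> {0,2}" for d n
  proof -
    have "y \<in> S d -` E (Suc n) \<longleftrightarrow> y \<in> E n" if y: "y \<in> {0..1}" for y
    proof -
      have sy: "S d y \<in> {0..1}" using y \<open>d \<in> {0,2}\<close> by (auto simp: S_def)
      have a0: "S d y \<in> S 0 ` Lv n \<longleftrightarrow> d = 0 \<and> y \<in> Lv n"
        by (rule S_mem_S) (use \<open>d \<in> {0,2}\<close> y Lv_sub in auto)
      have a2: "S d y \<in> S 2 ` Lv n \<longleftrightarrow> d = 2 \<and> y \<in> Lv n"
        by (rule S_mem_S) (use \<open>d \<in> {0,2}\<close> y Lv_sub in auto)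
      moreover have "S d y \<in> Lv (Suc n) \<longleftrightarrow> y \<in> Lv n"
        unfolding Lv_Suc using a0 a2 \<open>d \<in> {0,2}\<close> by auto
      ultimately show ?thesis using y sy by (auto simp: E_def)
    qed
    note yy = this
    show ?thesis
    proof (rule set_eqI)
      fix y show "y \<in> S d -` E (Suc n) \<inter> space M \<longleftrightarrow> y \<in> E n"
        using yy[of y] by (cases "y \<in> {0..1}") (auto simp: spM E_def)
    qed
  qed
  have z: "emeasure M (E n) = 0" for n
  proof (induction n)
    case 0 then show ?case by (simp add: E_def Lv_0)
  next
    case (Suc n)
    show ?case using ssA[OF Es[of "Suc n"]] pre[of 0 n] pre[of 2 n] Suc by simp
  qed
  have "(\<Union>n. E n) \<in> null_sets M" using z Es by (auto intro!: null_sets_UN)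
  moreover have "{x \<in> space M. x \<notin> cantor} \<subseteq> (\<Union>n. E n)"
    by (auto simp: spM E_def cantor_Lv)
  ultimately show ?thesis by (rule AE_I')
qed

lemma ind_meas: "A \<in> sets borel \<Longrightarrow> ind A \<in> borel_measurable M"
  unfolding ind_indicator by (intro measM borel_measurable_indicator)

lemma clamp_meas: "(\<lambda>x. min (max (3 * x - real d) 0) (1::real)) \<in> measurable M M"
  by (rule measMM) auto

lemma psi_meas:
  assumes phi: "phi \<in> borel_measurable M"
  shows "(\<lambda>x. ind (cyl [d]) x * (phi (3 * x - real d) :: complex)) \<in> borel_measurable M"
proof -
  have "(\<lambda>x. ind (cyl [d]) x * phi (min (max (3 * x - real d) 0) 1)) \<in> borel_measurable M"
    using ind_meas[OF cyl_borel] measurable_compose[OF clamp_meas phi] by measurable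
  moreover have "ind (cyl [d]) x * phi (min (max (3 * x - real d) 0) 1) = ind (cyl [d]) x * phi (3 * x - real d)" for x
  proof (cases "x \<in> cyl [d]")
    case True
    then have "3 * x - real d \<in> {0..1}" using cantor_sub by (auto simp: mem_cyl1)
    then show ?thesis by simp
  qed (simp add: ind_def)
  ultimately show ?thesis by simp
qed

lemma psi_S:
  assumes "d \<in> {0,2}" "e \<in> {0,2}" "y \<in> space M"
  shows "ind (cyl [d]) (S e y) * phi (3 * S e y - real d) = (if e = d then ind cantor y * phi y else 0)"
proof -
  have "S e y \<in> cyl [d] \<longleftrightarrow> (e = d \<and> y \<in> cantor)"
    using S_mem_S[OF assms(2,1) _ cantor_sub] assms(3) by (simp add: spM cyl_Cons cyl_Nil)
  then show ?thesis by (auto simp: ind_def)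
qed

lemma transfer:
  fixes phi :: "real \<Rightarrow> complex"
  assumes phi: "integrable M phi" and d: "d \<in> {0,2}"
  shows "integrable M (\<lambda>x. ind (cyl [d]) x * phi (3 * x - real d))"
    and "integral\<^sup>L M (\<lambda>x. ind (cyl [d]) x * phi (3 * x - real d)) = of_real (wt d) * integral\<^sup>L M phi"
proof -
  define psi where "psi = (\<lambda>x. ind (cyl [d]) x * phi (3 * x - real d))"
  have pm: "phi \<in> borel_measurable M" using phi by auto
  have psim: "psi \<in> borel_measurable M" unfolding psi_def using psi_meas[OF pm] .
  have nm: "(\<lambda>x. ennreal (norm (psi x))) \<in> borel_measurable M" using psim by measurable
  have fin: "(\<integral>\<^sup>+x. ennreal (norm (phi x)) \<partial>M) < top" using phi by (simp add: integrable_iff_bounded)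
  have le: "(\<integral>\<^sup>+x. ennreal (norm (psi (S e x))) \<partial>M) \<le> (\<integral>\<^sup>+x. ennreal (norm (phi x)) \<partial>M)" if e: "e \<in> {0,2}" for e
  proof (rule nn_integral_mono)
    fix x assume "x \<in> space M"
    then show "ennreal (norm (psi (S e x))) \<le> ennreal (norm (phi x))"
      unfolding psi_def using psi_S[OF d e] by (auto simp: ind_def norm_mult)
  qed
  have f0: "(\<integral>\<^sup>+x. ennreal (norm (psi (S e x))) \<partial>M) < top" if "e \<in> {0,2}" for e
    using le[OF that] fin by (meson le_less_trans)
  have "(\<integral>\<^sup>+x. ennreal (norm (psi x)) \<partial>M) < \<infinity>"
    unfolding nn_ss[OF nm] using f0[of 0] f0[of 2] by (simp add: ennreal_mult_less_top)
  then show ip: "integrable M (\<lambda>x. ind (cyl [d]) x * phi (3 * x - real d))"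
    using psim by (simp add: integrable_iff_bounded psi_def)
  have ie: "integral\<^sup>L M (\<lambda>x. psi (S e x)) = (if e = d then integral\<^sup>L M phi else 0)" if e: "e \<in> {0,2}" for e
  proof -
    have "integral\<^sup>L M (\<lambda>x. psi (S e x)) = integral\<^sup>L M (\<lambda>x. if e = d then ind cantor x * phi x else 0)"
      by (rule Bochner_Integration.integral_cong) (auto simp: psi_def psi_S[OF d e])
    also have "\<dots> = (if e = d then integral\<^sup>L M phi else 0)"
    proof (cases "e = d")
      case True
      have "integral\<^sup>L M (\<lambda>x. ind cantor x * phi x) = integral\<^sup>L M phi"
        apply (rule integral_cong_AE)
        using ind_meas[OF cantor_borel] pm apply measurable
        using AE_cantor by (auto simp: ind_def)
      then show ?thesis using True by simp
    qed simp
    finally show ?thesis .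
  qed
  show "integral\<^sup>L M (\<lambda>x. ind (cyl [d]) x * phi (3 * x - real d)) = of_real (wt d) * integral\<^sup>L M phi"
    using int_ss[OF ip] ie[of 0] ie[of 2] d unfolding psi_def wt_def by auto
qed

end



lemma ab_le: "(a::real) \<ge> 0 \<Longrightarrow> b \<ge> 0 \<Longrightarrow> a * b \<le> a\<^sup>2 + b\<^sup>2"
  using sum_squares_bound[of a b] mult_nonneg_nonneg[of a b] by linarith

lemma ind_cnj[simp]: "cnj (ind A x) = ind A x" by (simp add: ind_def)

lemma cnj_meas[measurable]: "f \<in> borel_measurable N \<Longrightarrow> (\<lambda>x. cnj (f x)) \<in> borel_measurable N"
proof -
  have "cnj \<in> borel_measurable borel"
    by (rule borel_measurable_continuous_onI) (intro continuous_intros)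
  then show "f \<in> borel_measurable N \<Longrightarrow> (\<lambda>x. cnj (f x)) \<in> borel_measurable N"
    using measurable_compose by blast
qed

context cm
begin

lemma L2_meas: "f \<in> L2 M \<Longrightarrow> f \<in> borel_measurable M" by (simp add: L2_def)
lemma L2_int: "f \<in> L2 M \<Longrightarrow> integrable M (\<lambda>x. (cmod (f x))\<^sup>2)" by (simp add: L2_def)

lemma ipint:
  assumes f: "f \<in> L2 M" and g: "g \<in> L2 M"
  shows "integrable M (\<lambda>x. cnj (f x) * g x)"
proof (rule Bochner_Integration.integrable_bound[of M "\<lambda>x. (cmod (f x))\<^sup>2 + (cmod (g x))\<^sup>2"])
  show "integrable M (\<lambda>x. (cmod (f x))\<^sup>2 + (cmod (g x))\<^sup>2)" using L2_int[OF f] L2_int[OF g] by auto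
  have [measurable]: "f \<in> borel_measurable M" "g \<in> borel_measurable M" using L2_meas[OF f] L2_meas[OF g] by auto
  show "(\<lambda>x. cnj (f x) * g x) \<in> borel_measurable M" by measurable
  show "AE x in M. norm (cnj (f x) * g x) \<le> norm ((cmod (f x))\<^sup>2 + (cmod (g x))\<^sup>2)"
    using ab_le[of "cmod (f _)" "cmod (g _)"] by (auto simp: norm_mult)
qed

lemma L2_add:
  assumes f: "f \<in> L2 M" and g: "g \<in> L2 M"
  shows "(\<lambda>x. f x + g x) \<in> L2 M"
  unfolding L2_def
proof (intro CollectI conjI)
  show "(\<lambda>x. f x + g x) \<in> borel_measurable M" using L2_meas[OF f] L2_meas[OF g] by measurable
  show "integrable M (\<lambda>x. (cmod (f x + g x))\<^sup>2)"
  proof (rule Bochner_Integration.integrable_bound[of M "\<lambda>x. 2 * (cmod (f x))\<^sup>2 + 2 * (cmod (g x))\<^sup>2"])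
    show "integrable M (\<lambda>x. 2 * (cmod (f x))\<^sup>2 + 2 * (cmod (g x))\<^sup>2)" using L2_int[OF f] L2_int[OF g] by auto
    show "(\<lambda>x. (cmod (f x + g x))\<^sup>2) \<in> borel_measurable M" using L2_meas[OF f] L2_meas[OF g] by measurable
    show "AE x in M. norm ((cmod (f x + g x))\<^sup>2) \<le> norm (2 * (cmod (f x))\<^sup>2 + 2 * (cmod (g x))\<^sup>2)"
    proof (rule AE_I2)
      fix x
      have t: "cmod (f x + g x) \<le> cmod (f x) + cmod (g x)" by (rule norm_triangle_ineq)
      have "(cmod (f x + g x))\<^sup>2 \<le> (cmod (f x) + cmod (g x))\<^sup>2"
        using t by (intro power_mono) auto
      also have "\<dots> \<le> 2 * (cmod (f x))\<^sup>2 + 2 * (cmod (g x))\<^sup>2"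
        using sum_squares_bound[of "cmod (f x)" "cmod (g x)"] by (simp add: power2_sum)
      finally show "norm ((cmod (f x + g x))\<^sup>2) \<le> norm (2 * (cmod (f x))\<^sup>2 + 2 * (cmod (g x))\<^sup>2)" by simp
    qed
  qed
qed

lemma L2_cmult:
  assumes f: "f \<in> L2 M"
  shows "(\<lambda>x. c * f x) \<in> L2 M"
  unfolding L2_def
proof (intro CollectI conjI)
  show "(\<lambda>x. c * f x) \<in> borel_measurable M" using L2_meas[OF f] by measurable
  have "integrable M (\<lambda>x. (cmod c)\<^sup>2 * (cmod (f x))\<^sup>2)" using L2_int[OF f] by auto
  then show "integrable M (\<lambda>x. (cmod (c * f x))\<^sup>2)" by (simp add: norm_mult power_mult_distrib)
qed

lemma L2_diff:
  assumes f: "f \<in> L2 M" and g: "g \<in> L2 M"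
  shows "(\<lambda>x. f x - g x) \<in> L2 M"
  using L2_add[OF f L2_cmult[OF g, of "-1"]] by simp

lemma L2_sum:
  assumes "finite I" "\<And>i. i \<in> I \<Longrightarrow> F i \<in> L2 M"
  shows "(\<lambda>x. \<Sum>i\<in>I. F i x) \<in> L2 M"
  using assms
proof (induction I rule: finite_induct)
  case empty
  have "(\<lambda>x. 0 * (0::complex)) \<in> L2 M"
    by (rule L2_cmult) (simp add: L2_def)
  then show ?case by simp
next
  case (insert i I)
  then show ?case using L2_add[of "F i" "\<lambda>x. \<Sum>i\<in>I. F i x"] by simp
qed

lemma L2_ind: "A \<in> sets borel \<Longrightarrow> ind A \<in> L2 M"
  unfolding L2_def
proof (intro CollectI conjI)
  assume A: "A \<in> sets borel"
  show "ind A \<in> borel_measurable M" using ind_meas[OF A] .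
  show "integrable M (\<lambda>x. (cmod (ind A x))\<^sup>2)"
  proof (rule finite_measure.integrable_const_bound[OF finM, where B=1])
    show "AE x in M. norm ((cmod (ind A x))\<^sup>2) \<le> 1" by (simp add: ind_def)
    show "(\<lambda>x. (cmod (ind A x))\<^sup>2) \<in> borel_measurable M" using ind_meas[OF A] by measurable
  qed
qed

definition Ud :: "nat \<Rightarrow> (real \<Rightarrow> complex) \<Rightarrow> real \<Rightarrow> complex" where
  "Ud d f x = complex_of_real (1 / sqrt (wt d)) * ind (cyl [d]) x * f (3 * x - real d)"

lemma wt_pos: "d \<in> {0,2} \<Longrightarrow> wt d > 0" using p0 p1 by (auto simp: wt_def)

lemma W_Ud: "Wop p f g x = Ud 0 f x + Ud 2 g x"
  by (simp add: Wop_def U0_def U2_def Ud_def wt_def)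

lemma Ud_pt: assumes d: "d \<in> {0,2}"
  shows "cnj (Ud d f' x) * Ud d f x = of_real (1 / wt d) * (ind (cyl [d]) x * (cnj (f' (3 * x - real d)) * f (3 * x - real d)))"
proof -
  have w: "wt d > 0" using wt_pos[OF d] .
  have "cnj (complex_of_real (1 / sqrt (wt d))) * complex_of_real (1 / sqrt (wt d)) = complex_of_real (1 / wt d)"
    using w by (simp flip: of_real_mult)
  then show ?thesis unfolding Ud_def by (auto simp: ind_def algebra_simps)
qed

lemma Ud_int:
  assumes f: "f \<in> L2 M" and f': "f' \<in> L2 M" and d: "d \<in> {0,2}"
  shows "integrable M (\<lambda>x. cnj (Ud d f' x) * Ud d f x)"
    and "integral\<^sup>L M (\<lambda>x. cnj (Ud d f' x) * Ud d f x) = ip M f' f"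
proof -
  note t = transfer[OF ipint[OF f' f] d]
  show "integrable M (\<lambda>x. cnj (Ud d f' x) * Ud d f x)"
    unfolding Ud_pt[OF d] using t(1) by auto
  show "integral\<^sup>L M (\<lambda>x. cnj (Ud d f' x) * Ud d f x) = ip M f' f"
    unfolding Ud_pt[OF d] integral_mult_right_zero t(2) ip_def
    using wt_pos[OF d] by (simp flip: of_real_mult)
qed

lemma Ud_L2:
  assumes f: "f \<in> L2 M" and d: "d \<in> {0,2}"
  shows "Ud d f \<in> L2 M"
  unfolding L2_def
proof (intro CollectI conjI)
  have fm: "f \<in> borel_measurable M" using L2_meas[OF f] .
  have "(\<lambda>x. ind (cyl [d]) x * f (3 * x - real d)) \<in> borel_measurable M" using psi_meas[OF fm] .
  then have "(\<lambda>x. complex_of_real (1 / sqrt (wt d)) * (ind (cyl [d]) x * f (3 * x - real d))) \<in> borel_measurable M"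
    by measurable
  then show "Ud d f \<in> borel_measurable M" unfolding Ud_def[abs_def] by (simp add: mult.assoc)
  have I: "integrable M (\<lambda>x. Re (cnj (Ud d f x) * Ud d f x))" using Ud_int(1)[OF f f d] by (rule integrable_Re)
  have eq: "(\<lambda>x. Re (cnj (Ud d f x) * Ud d f x)) = (\<lambda>x. (cmod (Ud d f x))\<^sup>2)"
    by (simp add: cmod_power2 power2_eq_square[symmetric])
  show "integrable M (\<lambda>x. (cmod (Ud d f x))\<^sup>2)" using I unfolding eq .
qed

lemma Ud_cross: "cnj (Ud 0 f' x) * Ud 2 g x = 0" "cnj (Ud 2 g' x) * Ud 0 f x = 0"
  using cyl02_disj[of x] by (auto simp: Ud_def ind_def)

lemma W_L2: "f \<in> L2 M \<Longrightarrow> g \<in> L2 M \<Longrightarrow> Wop p f g \<in> L2 M"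
  using L2_add[OF Ud_L2[of f 0] Ud_L2[of g 2]] by (simp add: W_Ud[abs_def])

lemma W_iso:
  assumes "f \<in> L2 M" "g \<in> L2 M" "f' \<in> L2 M" "g' \<in> L2 M"
  shows "ip M (Wop p f' g') (Wop p f g) = ip M f' f + ip M g' g"
proof -
  have "ip M (Wop p f' g') (Wop p f g) = integral\<^sup>L M (\<lambda>x. cnj (Ud 0 f' x) * Ud 0 f x + cnj (Ud 2 g' x) * Ud 2 g x)"
    unfolding ip_def W_Ud by (simp only: complex_cnj_add distrib_left distrib_right Ud_cross) simp
  also have "\<dots> = ip M f' f + ip M g' g"
    using Ud_int[of f f' 0] Ud_int[of g g' 2] assms by simp
  finally show ?thesis .
qed

lemma W_surj:
  assumes h: "h \<in> L2 M"
  shows "\<exists>f\<in>L2 M. \<exists>g\<in>L2 M. AE x in M. Wop p f g x = h x"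
proof -
  have hm: "h \<in> borel_measurable M" using L2_meas[OF h] .
  have comp: "(\<lambda>y. c * h (S d y)) \<in> L2 M" if d: "d \<in> {0,2}" for c d
  proof -
    have "(\<lambda>y. h (S d y)) \<in> L2 M"
      unfolding L2_def using measurable_compose[OF S_meas[OF d] hm] int_S[OF L2_int[OF h] d] by simp
    then show ?thesis by (rule L2_cmult)
  qed
  define f where "f = (\<lambda>y. complex_of_real (sqrt p) * h (S 0 y))"
  define g where "g = (\<lambda>y. complex_of_real (sqrt (1 - p)) * h (S 2 y))"
  have "f \<in> L2 M" "g \<in> L2 M" unfolding f_def g_def using comp by auto
  moreover have "AE x in M. Wop p f g x = h x"
    using AE_cantor
  proof (rule AE_mp, intro AE_I2 impI)
    fix x assume x: "x \<in> cantor"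
    have s0: "S 0 (3 * x) = x" "S 2 (3 * x - 2) = x" by (simp_all add: S_def)
    have c1: "sqrt p \<noteq> 0" "sqrt (1 - p) \<noteq> 0" using p0 p1 by auto
    show "Wop p f g x = h x"
      using x cantor_cyl[of x] cyl02_disj[of x] s0 c1
      by (auto simp: Wop_def U0_def U2_def f_def g_def ind_def simp flip: of_real_mult)
  qed
  ultimately show ?thesis by blast
qed

end



lemma ineq_e:
  fixes a b e :: real assumes e: "e > 0"
  shows "a * b \<le> e / 2 * a\<^sup>2 + 1 / (2 * e) * b\<^sup>2"
proof -
  have h: "2 * (e * a) * b \<le> (e * a)\<^sup>2 + b\<^sup>2" by (rule sum_squares_bound)
  have "e / 2 * a\<^sup>2 + 1 / (2 * e) * b\<^sup>2 = ((e * a)\<^sup>2 + b\<^sup>2) / (2 * e)"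
    using e by (simp add: field_simps power2_eq_square)
  moreover have "a * b \<le> ((e * a)\<^sup>2 + b\<^sup>2) / (2 * e)"
    using h e by (simp add: pos_le_divide_eq mult_ac)
  ultimately show ?thesis by simp
qed

context cm
begin

lemma U_fin: "finite {u::nat list. length u \<le> m \<and> set u \<subseteq> {0,2}}"
proof -
  have "finite {xs::nat list. set xs \<subseteq> {0,2} \<and> length xs \<le> m}" by (rule finite_lists_length_le) simp
  then show ?thesis by (simp add: conj_commute)
qed

lemma Km_eq: "Km M m f = (\<lambda>x. \<Sum>u\<in>{u. length u \<le> m \<and> set u \<subseteq> {0, 2}}. ip M (ind (cyl u)) f * ind (cyl u) x)"
  by (rule ext) (simp add: Km_def)

lemma Km_L2: "Km M m f \<in> L2 M"
  unfolding Km_eq by (intro L2_sum U_fin L2_cmult L2_ind cyl_borel)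

lemma ip_sum:
  assumes x: "x \<in> L2 M" and I: "finite I" and F: "\<And>i. i \<in> I \<Longrightarrow> F i \<in> L2 M"
  shows "ip M x (\<lambda>t. \<Sum>i\<in>I. F i t) = (\<Sum>i\<in>I. ip M x (F i))"
  unfolding ip_def sum_distrib_left
  by (rule Bochner_Integration.integral_sum) (use ipint[OF x F] in auto)

lemma ip_cmult: "ip M x (\<lambda>t. c * F t) = c * ip M x F"
  unfolding ip_def by (simp add: mult.left_commute)

lemma ip_add:
  assumes "x \<in> L2 M" "a \<in> L2 M" "b \<in> L2 M"
  shows "ip M x (\<lambda>t. a t + b t) = ip M x a + ip M x b"
  unfolding ip_def distrib_left using ipint[OF assms(1,2)] ipint[OF assms(1,3)] by simp

lemma ip_diff:
  assumes "x \<in> L2 M" "a \<in> L2 M" "b \<in> L2 M"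
  shows "ip M x (\<lambda>t. a t - b t) = ip M x a - ip M x b"
  unfolding ip_def right_diff_distrib using ipint[OF assms(1,2)] ipint[OF assms(1,3)] by simp

lemma ip_swap: "ip M a b = cnj (ip M b a)"
proof -
  have "cnj (ip M b a) = integral\<^sup>L M (\<lambda>t. cnj (cnj (b t) * a t))"
    unfolding ip_def by (rule Bochner_Integration.integral_cnj[symmetric])
  also have "\<dots> = ip M a b" unfolding ip_def by (simp del: Bochner_Integration.integral_cnj add: mult.commute)
  finally show ?thesis by simp
qed

lemma ip_Km:
  assumes x: "x \<in> L2 M"
  shows "ip M x (Km M m y) = (\<Sum>u\<in>{u. length u \<le> m \<and> set u \<subseteq> {0, 2}}. ip M (ind (cyl u)) y * ip M x (ind (cyl u)))"
  unfolding Km_eq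
  by (subst ip_sum[OF x U_fin]) (auto intro!: L2_cmult L2_ind cyl_borel simp: ip_cmult)

lemma Klim:
  fixes Kinf :: "(real \<Rightarrow> complex) \<Rightarrow> real \<Rightarrow> complex"
  assumes KL: "\<And>f. f \<in> L2 M \<Longrightarrow> Kinf f \<in> L2 M"
    and Kl: "\<forall>e>0. \<exists>N. \<forall>m\<ge>N. \<forall>f\<in>L2 M. L2norm M (\<lambda>x. Km M m f x - Kinf f x) \<le> e * L2norm M f"
    and x: "x \<in> L2 M" and y: "y \<in> L2 M"
  shows "(\<lambda>m. ip M x (Km M m y)) \<longlonglongrightarrow> ip M x (Kinf y)"
proof (rule LIMSEQ_I)
  fix r :: real assume r: "r > 0"
  define X where "X = integral\<^sup>L M (\<lambda>t. (cmod (x t))\<^sup>2)"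
  define Y where "Y = integral\<^sup>L M (\<lambda>t. (cmod (y t))\<^sup>2)"
  have X0: "X \<ge> 0" "Y \<ge> 0" unfolding X_def Y_def by (auto intro!: integral_nonneg_AE)
  define e where "e = r / (X + Y + 1)"
  have e0: "e > 0" using r X0 by (simp add: e_def)
  obtain N where N: "\<forall>m\<ge>N. \<forall>f\<in>L2 M. L2norm M (\<lambda>x. Km M m f x - Kinf f x) \<le> e * L2norm M f"
    using Kl e0 by blast
  show "\<exists>N. \<forall>m\<ge>N. norm (ip M x (Km M m y) - ip M x (Kinf y)) < r"
  proof (intro exI allI impI)
    fix m assume m: "N \<le> m"
    define d where "d = (\<lambda>t. Km M m y t - Kinf y t)"
    have dL: "d \<in> L2 M" unfolding d_def by (intro L2_diff Km_L2 KL y)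
    define D where "D = integral\<^sup>L M (\<lambda>t. (cmod (d t))\<^sup>2)"
    have D0: "D \<ge> 0" unfolding D_def by (auto intro!: integral_nonneg_AE)
    have "sqrt D \<le> e * sqrt Y" using N m y unfolding D_def Y_def d_def L2norm_def by blast
    then have "(sqrt D)\<^sup>2 \<le> (e * sqrt Y)\<^sup>2" using D0 by (intro power_mono) auto
    then have DY: "D \<le> e\<^sup>2 * Y" using D0 X0 by (simp add: power_mult_distrib)
    have "ip M x (Km M m y) - ip M x (Kinf y) = ip M x d"
      unfolding d_def by (rule ip_diff[symmetric]) (use x Km_L2 KL y in auto)
    also have "norm (ip M x d) \<le> integral\<^sup>L M (\<lambda>t. norm (cnj (x t) * d t))"
      unfolding ip_def by (rule integral_norm_bound)
    also have "\<dots> \<le> integral\<^sup>L M (\<lambda>t. e / 2 * (cmod (x t))\<^sup>2 + 1 / (2 * e) * (cmod (d t))\<^sup>2)"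
    proof (rule integral_mono)
      show "integrable M (\<lambda>t. norm (cnj (x t) * d t))" using ipint[OF x dL] by auto
      show "integrable M (\<lambda>t. e / 2 * (cmod (x t))\<^sup>2 + 1 / (2 * e) * (cmod (d t))\<^sup>2)"
        using L2_int[OF x] L2_int[OF dL] by auto
      show "norm (cnj (x t) * d t) \<le> e / 2 * (cmod (x t))\<^sup>2 + 1 / (2 * e) * (cmod (d t))\<^sup>2" for t
        using ineq_e[OF e0, of "cmod (x t)" "cmod (d t)"] by (simp add: norm_mult)
    qed
    also have "\<dots> = e / 2 * X + 1 / (2 * e) * D"
      unfolding X_def D_def using L2_int[OF x] L2_int[OF dL] by simp
    also have "\<dots> \<le> e / 2 * X + 1 / (2 * e) * (e\<^sup>2 * Y)"
      using DY e0 by (intro add_left_mono mult_left_mono) auto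
    also have "\<dots> = e / 2 * (X + Y)" using e0 by (simp add: field_simps power2_eq_square)
    also have "\<dots> < e * (X + Y + 1)"
    proof -
      have "(X + Y) / 2 < X + Y + 1" using X0 by simp
      then have "e * ((X + Y) / 2) < e * (X + Y + 1)" by (rule mult_strict_left_mono) (use e0 in auto)
      then show ?thesis by simp
    qed
    also have "\<dots> = r" using X0 by (simp add: e_def)
    finally show "norm (ip M x (Km M m y) - ip M x (Kinf y)) < r" .
  qed
qed

end



lemma sq_aux:
  assumes w: "w > 0"
  shows "complex_of_real (1 / sqrt w) * (complex_of_real w * z) = complex_of_real (sqrt w) * z"
proof -
  have "(1 / sqrt w) * w = sqrt w" using w by (simp add: real_div_sqrt)
  then have "complex_of_real (1 / sqrt w) * complex_of_real w = complex_of_real (sqrt w)" by (metis of_real_mult)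
  then show ?thesis by (metis mult.assoc)
qed

context cm
begin

lemma wt0: "wt 0 > 0" and wt2: "wt 2 > 0" using wt_pos by auto

lemma ip_cylW:
  assumes v: "set v \<subseteq> {0,2}" and d: "d \<in> {0,2}" and f: "f \<in> L2 M" and g: "g \<in> L2 M"
  shows "ip M (ind (cyl (d # v))) (Wop p f g) = of_real (sqrt (wt d)) * ip M (ind (cyl v)) (if d = 0 then f else g)"
proof -
  define F where "F = (if d = 0 then f else g)"
  have F: "F \<in> L2 M" using f g by (simp add: F_def)
  have sub: "cyl (d # v) \<subseteq> cyl [d]"
    using cyl_sub[OF v] by (auto simp: cyl_Cons cyl_Nil)
  have pt: "cnj (ind (cyl (d # v)) x) * Wop p f g x =
     of_real (1 / sqrt (wt d)) * (ind (cyl [d]) x * (cnj (ind (cyl v) (3 * x - real d)) * F (3 * x - real d)))" for x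
  proof (cases "x \<in> cyl [d]")
    case True
    have i: "ind (cyl (d # v)) x = ind (cyl v) (3 * x - real d)"
      by (simp add: ind_def cyl_Cons S_img)
    have o: "x \<notin> cyl [0] \<or> x \<notin> cyl [2]" using cyl02_disj by blast
    show ?thesis using True d o unfolding W_Ud i F_def by (auto simp: Ud_def ind_def)
  next
    case False
    then have "x \<notin> cyl (d # v)" using sub by blast
    then show ?thesis using False by (simp add: ind_def)
  qed
  have "ip M (ind (cyl (d # v))) (Wop p f g) =
      of_real (1 / sqrt (wt d)) * integral\<^sup>L M (\<lambda>x. ind (cyl [d]) x * (cnj (ind (cyl v) (3 * x - real d)) * F (3 * x - real d)))"
    unfolding ip_def pt by simp
  also have "\<dots> = of_real (1 / sqrt (wt d)) * (of_real (wt d) * ip M (ind (cyl v)) F)"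
    using transfer(2)[OF ipint[OF L2_ind[OF cyl_borel] F] d] unfolding ip_def by simp
  also have "\<dots> = of_real (sqrt (wt d)) * ip M (ind (cyl v)) F"
    using sq_aux[OF wt_pos[OF d]] by simp
  finally show ?thesis by (simp add: F_def)
qed

lemma ip_cantorW:
  assumes f: "f \<in> L2 M" and g: "g \<in> L2 M"
  shows "ip M (ind cantor) (Wop p f g) = of_real (sqrt p) * ip M (ind cantor) f + of_real (sqrt (1 - p)) * ip M (ind cantor) g"
proof -
  have pt: "cnj (ind cantor x) * Wop p f g x =
     of_real (1 / sqrt (wt 0)) * (ind (cyl [0]) x * (cnj (ind cantor (3 * x - real 0)) * f (3 * x - real 0)))
   + of_real (1 / sqrt (wt 2)) * (ind (cyl [2]) x * (cnj (ind cantor (3 * x - real 2)) * g (3 * x - real 2)))" for x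
  proof -
    consider "x \<in> cyl [0]" | "x \<in> cyl [2]" | "x \<notin> cyl [0]" "x \<notin> cyl [2]" by blast
    then show ?thesis
    proof cases
      case 1
      then have "x \<in> cantor" "x \<notin> cyl [2]" "3 * x \<in> cantor" using cantor_cyl cyl02_disj mem_cyl1[of x 0] by auto
      then show ?thesis using 1 unfolding W_Ud by (simp add: Ud_def ind_def)
    next
      case 2
      then have "x \<in> cantor" "x \<notin> cyl [0]" "3 * x - 2 \<in> cantor" using cantor_cyl cyl02_disj mem_cyl1[of x 2] by auto
      then show ?thesis using 2 unfolding W_Ud by (simp add: Ud_def ind_def)
    next
      case 3
      then have "x \<notin> cantor" using cantor_cyl by auto
      then show ?thesis using 3 by (simp add: ind_def)
    qed
  qed
  note t0 = transfer[OF ipint[OF L2_ind[OF cantor_borel] f], of 0]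
  note t2 = transfer[OF ipint[OF L2_ind[OF cantor_borel] g], of 2]
  have "ip M (ind cantor) (Wop p f g) =
      of_real (1 / sqrt (wt 0)) * (of_real (wt 0) * ip M (ind cantor) f)
    + of_real (1 / sqrt (wt 2)) * (of_real (wt 2) * ip M (ind cantor) g)"
    unfolding ip_def pt using t0 t2 by (simp add: ip_def)
  also have "\<dots> = of_real (sqrt (wt 0)) * ip M (ind cantor) f + of_real (sqrt (wt 2)) * ip M (ind cantor) g"
    by (simp only: sq_aux[OF wt0] sq_aux[OF wt2])
  also have "\<dots> = of_real (sqrt p) * ip M (ind cantor) f + of_real (sqrt (1 - p)) * ip M (ind cantor) g"
    by (simp add: wt_def)
  finally show ?thesis .
qed

lemma U_Suc: "{u::nat list. length u \<le> Suc m \<and> set u \<subseteq> {0,2}} =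
   insert [] (Cons 0 ` {u. length u \<le> m \<and> set u \<subseteq> {0,2}} \<union> Cons 2 ` {u. length u \<le> m \<and> set u \<subseteq> {0,2}})"
proof (rule set_eqI)
  fix u :: "nat list"
  show "u \<in> {u. length u \<le> Suc m \<and> set u \<subseteq> {0,2}} \<longleftrightarrow>
     u \<in> insert [] (Cons 0 ` {u. length u \<le> m \<and> set u \<subseteq> {0,2}} \<union> Cons 2 ` {u. length u \<le> m \<and> set u \<subseteq> {0,2}})"
    by (cases u) auto
qed

lemma sum_U_Suc:
  "(\<Sum>u\<in>{u::nat list. length u \<le> Suc m \<and> set u \<subseteq> {0,2}}. G u) =
     G [] + (\<Sum>v\<in>{u. length u \<le> m \<and> set u \<subseteq> {0,2}}. G (0 # v)) + (\<Sum>v\<in>{u. length u \<le> m \<and> set u \<subseteq> {0,2}}. G (2 # v))"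
proof -
  let ?V = "{u::nat list. length u \<le> m \<and> set u \<subseteq> {0,2}}"
  have fin: "finite (Cons 0 ` ?V)" "finite (Cons 2 ` ?V)" using U_fin by auto
  have "(\<Sum>u\<in>insert [] (Cons 0 ` ?V \<union> Cons 2 ` ?V). G u) = G [] + (\<Sum>u\<in>Cons 0 ` ?V \<union> Cons 2 ` ?V. G u)"
    by (rule sum.insert) (use fin in auto)
  also have "(\<Sum>u\<in>Cons 0 ` ?V \<union> Cons 2 ` ?V. G u) = (\<Sum>u\<in>Cons 0 ` ?V. G u) + (\<Sum>u\<in>Cons 2 ` ?V. G u)"
    by (rule sum.union_disjoint) (use fin in auto)
  also have "(\<Sum>u\<in>Cons 0 ` ?V. G u) = (\<Sum>v\<in>?V. G (0 # v))" by (simp add: sum.reindex)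
  also have "(\<Sum>u\<in>Cons 2 ` ?V. G u) = (\<Sum>v\<in>?V. G (2 # v))" by (simp add: sum.reindex)
  finally show ?thesis unfolding U_Suc by (simp add: add.assoc)
qed

end



context cm
begin

lemma Pphi_eq: "Pphi M f = (\<lambda>x. ip M (ind cantor) f * ind cantor x)"
  by (rule ext) (simp add: Pphi_def)

lemma Pphi_L2: "Pphi M f \<in> L2 M"
  unfolding Pphi_eq by (intro L2_cmult L2_ind cantor_borel)

lemma ip_Pphi: "x \<in> L2 M \<Longrightarrow> ip M x (Pphi M f) = ip M (ind cantor) f * cnj (ip M (ind cantor) x)"
  unfolding Pphi_eq ip_cmult by (simp add: ip_swap[of x])

lemma main4:
  fixes Kinf :: "(real \<Rightarrow> complex) \<Rightarrow> real \<Rightarrow> complex"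
  assumes KL: "\<And>f. f \<in> L2 M \<Longrightarrow> Kinf f \<in> L2 M"
    and Kl: "\<forall>e>0. \<exists>N. \<forall>m\<ge>N. \<forall>f\<in>L2 M. L2norm M (\<lambda>x. Km M m f x - Kinf f x) \<le> e * L2norm M f"
    and f: "f \<in> L2 M" and g: "g \<in> L2 M" and f': "f' \<in> L2 M" and g': "g' \<in> L2 M"
  shows "ip M (Wop p f' g') (Kinf (Wop p f g))
          = ip M f' (\<lambda>x. of_real p * Kinf f x + of_real p * Pphi M f x
                          + of_real (sqrt (p * (1 - p))) * Pphi M g x)
          + ip M g' (\<lambda>x. of_real (sqrt (p * (1 - p))) * Pphi M f x
                          + of_real (1 - p) * Kinf g x + of_real (1 - p) * Pphi M g x)"
proof -
  define W where "W = Wop p f g"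
  define W' where "W' = Wop p f' g'"
  have WL: "W \<in> L2 M" "W' \<in> L2 M" unfolding W_def W'_def using W_L2 f g f' g' by auto
  define a where "a = ip M (ind cantor) f"
  define b where "b = ip M (ind cantor) g"
  define a' where "a' = ip M (ind cantor) f'"
  define b' where "b' = ip M (ind cantor) g'"
  define sp where "sp = complex_of_real (sqrt p)"
  define sq where "sq = complex_of_real (sqrt (1 - p))"
  have hp: "complex_of_real p = sp * sp" unfolding sp_def using p0 by (simp flip: of_real_mult)
  have h1p: "complex_of_real (1 - p) = sq * sq" unfolding sq_def using p1 by (simp flip: of_real_mult)
  have hs: "complex_of_real (sqrt (p * (1 - p))) = sp * sq" unfolding sp_def sq_def by (simp add: real_sqrt_mult)
  have sw0: "complex_of_real (sqrt (wt 0)) = sp" and sw2: "complex_of_real (sqrt (wt 2)) = sq"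
    by (simp_all add: wt_def sp_def sq_def)
  define c where "c = (sp * a + sq * b) * (sp * cnj a' + sq * cnj b')"
  define V where "V m = {u::nat list. length u \<le> m \<and> set u \<subseteq> {0,2}}" for m
  have cylL: "ind (cyl v) \<in> L2 M" for v by (intro L2_ind cyl_borel)
  have step1: "ip M W' (Km M (Suc m) W) = of_real p * ip M f' (Km M m f) + of_real (1 - p) * ip M g' (Km M m g) + c" for m
  proof -
    define G where "G u = ip M (ind (cyl u)) W * ip M W' (ind (cyl u))" for u
    have "ip M W' (Km M (Suc m) W) = (\<Sum>u\<in>V (Suc m). G u)"
      unfolding ip_Km[OF WL(2)] G_def V_def ..
    also have "\<dots> = G [] + (\<Sum>v\<in>V m. G (0 # v)) + (\<Sum>v\<in>V m. G (2 # v))"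
      unfolding V_def by (rule sum_U_Suc)
    also have "G [] = c"
    proof -
      have "ip M (ind (cyl [])) W = sp * a + sq * b"
        unfolding cyl_Nil W_def ip_cantorW[OF f g] a_def b_def sp_def sq_def ..
      moreover have "ip M W' (ind (cyl [])) = sp * cnj a' + sq * cnj b'"
        unfolding cyl_Nil W'_def ip_swap[of "Wop p f' g'"] ip_cantorW[OF f' g'] a'_def b'_def sp_def sq_def
        by simp
      ultimately show ?thesis unfolding G_def c_def by simp
    qed
    also have "(\<Sum>v\<in>V m. G (0 # v)) = of_real p * ip M f' (Km M m f)"
    proof -
      have "G (0 # v) = of_real p * (ip M (ind (cyl v)) f * ip M f' (ind (cyl v)))" if "v \<in> V m" for v
      proof -
        have v: "set v \<subseteq> {0,2}" using that by (simp add: V_def)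
        have e1: "ip M (ind (cyl (0 # v))) W = sp * ip M (ind (cyl v)) f"
          using ip_cylW[where d=0, OF v _ f g] sw0 unfolding W_def by simp
        have e2: "ip M W' (ind (cyl (0 # v))) = sp * ip M f' (ind (cyl v))"
        proof -
          have "ip M W' (ind (cyl (0 # v))) = cnj (ip M (ind (cyl (0 # v))) W')" by (rule ip_swap)
          also have "ip M (ind (cyl (0 # v))) W' = sp * ip M (ind (cyl v)) f'"
            using ip_cylW[where d=0, OF v _ f' g'] sw0 unfolding W'_def by simp
          finally show ?thesis by (simp add: ip_swap[of f'] sp_def)
        qed
        show ?thesis unfolding G_def e1 e2 hp by (simp add: algebra_simps)
      qed
      then have "(\<Sum>v\<in>V m. G (0 # v)) = (\<Sum>v\<in>V m. of_real p * (ip M (ind (cyl v)) f * ip M f' (ind (cyl v))))"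
        by (rule sum.cong[OF refl])
      also have "\<dots> = of_real p * ip M f' (Km M m f)"
        unfolding ip_Km[OF f'] V_def by (simp add: sum_distrib_left)
      finally show ?thesis .
    qed
    also have "(\<Sum>v\<in>V m. G (2 # v)) = of_real (1 - p) * ip M g' (Km M m g)"
    proof -
      have "G (2 # v) = of_real (1 - p) * (ip M (ind (cyl v)) g * ip M g' (ind (cyl v)))" if "v \<in> V m" for v
      proof -
        have v: "set v \<subseteq> {0,2}" using that by (simp add: V_def)
        have e1: "ip M (ind (cyl (2 # v))) W = sq * ip M (ind (cyl v)) g"
          using ip_cylW[where d=2, OF v _ f g] sw2 unfolding W_def by simp
        have e2: "ip M W' (ind (cyl (2 # v))) = sq * ip M g' (ind (cyl v))"
        proof -
          have "ip M W' (ind (cyl (2 # v))) = cnj (ip M (ind (cyl (2 # v))) W')" by (rule ip_swap)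
          also have "ip M (ind (cyl (2 # v))) W' = sq * ip M (ind (cyl v)) g'"
            using ip_cylW[where d=2, OF v _ f' g'] sw2 unfolding W'_def by simp
          finally show ?thesis by (simp add: ip_swap[of g'] sq_def)
        qed
        show ?thesis unfolding G_def e1 e2 h1p by (simp add: algebra_simps)
      qed
      then have "(\<Sum>v\<in>V m. G (2 # v)) = (\<Sum>v\<in>V m. of_real (1 - p) * (ip M (ind (cyl v)) g * ip M g' (ind (cyl v))))"
        by (rule sum.cong[OF refl])
      also have "\<dots> = of_real (1 - p) * ip M g' (Km M m g)"
        unfolding ip_Km[OF g'] V_def by (simp add: sum_distrib_left)
      finally show ?thesis .
    qed
    finally show ?thesis by (simp add: algebra_simps)
  qed
  have lim1: "(\<lambda>m. ip M W' (Km M (Suc m) W)) \<longlonglongrightarrow> ip M W' (Kinf W)"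
    using LIMSEQ_Suc[OF Klim[OF KL Kl WL(2) WL(1)]] .
  have lim2: "(\<lambda>m. ip M W' (Km M (Suc m) W)) \<longlonglongrightarrow> of_real p * ip M f' (Kinf f) + of_real (1 - p) * ip M g' (Kinf g) + c"
    unfolding step1
    by (intro tendsto_add tendsto_mult_left tendsto_const Klim[OF KL Kl f' f] Klim[OF KL Kl g' g])
  have key: "ip M W' (Kinf W) = of_real p * ip M f' (Kinf f) + of_real (1 - p) * ip M g' (Kinf g) + c"
    using LIMSEQ_unique[OF lim1 lim2] .
  have Kf: "Kinf f \<in> L2 M" "Kinf g \<in> L2 M" using KL f g by auto
  have r1: "ip M f' (\<lambda>x. of_real p * Kinf f x + of_real p * Pphi M f x + of_real (sqrt (p * (1 - p))) * Pphi M g x)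
     = of_real p * ip M f' (Kinf f) + of_real p * (a * cnj a') + of_real (sqrt (p * (1 - p))) * (b * cnj a')"
    apply (subst ip_add[OF f'])
      apply (intro L2_add L2_cmult Kf Pphi_L2)
     apply (intro L2_add L2_cmult Kf Pphi_L2)
    apply (subst ip_add[OF f'])
      apply (intro L2_add L2_cmult Kf Pphi_L2)
     apply (intro L2_add L2_cmult Kf Pphi_L2)
    apply (simp add: ip_cmult ip_Pphi[OF f'] a_def b_def a'_def)
    done
  have r2: "ip M g' (\<lambda>x. of_real (sqrt (p * (1 - p))) * Pphi M f x + of_real (1 - p) * Kinf g x + of_real (1 - p) * Pphi M g x)
     = of_real (sqrt (p * (1 - p))) * (a * cnj b') + of_real (1 - p) * ip M g' (Kinf g) + of_real (1 - p) * (b * cnj b')"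
    apply (subst ip_add[OF g'])
      apply (intro L2_add L2_cmult Kf Pphi_L2)
     apply (intro L2_add L2_cmult Kf Pphi_L2)
    apply (subst ip_add[OF g'])
      apply (intro L2_add L2_cmult Kf Pphi_L2)
     apply (intro L2_add L2_cmult Kf Pphi_L2)
    apply (simp add: ip_cmult ip_Pphi[OF g'] a_def b_def b'_def)
    done
  show ?thesis
    unfolding W_def[symmetric] W'_def[symmetric] key r1 r2
    unfolding c_def hp h1p hs
    by (simp add: algebra_simps)
qed

end

theorem corollary6p4:
  fixes p :: real and M :: "real measure" and Kinf :: "(real \<Rightarrow> complex) \<Rightarrow> real \<Rightarrow> complex"
  assumes p: "0 < p" "p < 1"
    and mu: "is_mu p M"
    and Kinf_L2: "\<And>f. f \<in> L2 M \<Longrightarrow> Kinf f \<in> L2 M"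
    and Kinf_lim: "\<forall>e>0. \<exists>N. \<forall>m\<ge>N. \<forall>f\<in>L2 M.
                      L2norm M (\<lambda>x. Km M m f x - Kinf f x) \<le> e * L2norm M f"
  shows
    "(\<forall>f\<in>L2 M. \<forall>g\<in>L2 M. Wop p f g \<in> L2 M)
     \<and> (\<forall>f\<in>L2 M. \<forall>g\<in>L2 M. \<forall>f'\<in>L2 M. \<forall>g'\<in>L2 M.
          ip M (Wop p f' g') (Wop p f g) = ip M f' f + ip M g' g)
     \<and> (\<forall>h\<in>L2 M. \<exists>f\<in>L2 M. \<exists>g\<in>L2 M. AE x in M. Wop p f g x = h x)
     \<and> (\<forall>f\<in>L2 M. \<forall>g\<in>L2 M. \<forall>f'\<in>L2 M. \<forall>g'\<in>L2 M.
          ip M (Wop p f' g') (Kinf (Wop p f g))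
          = ip M f' (\<lambda>x. of_real p * Kinf f x + of_real p * Pphi M f x
                          + of_real (sqrt (p * (1 - p))) * Pphi M g x)
          + ip M g' (\<lambda>x. of_real (sqrt (p * (1 - p))) * Pphi M f x
                          + of_real (1 - p) * Kinf g x + of_real (1 - p) * Pphi M g x))"
proof -
  interpret cm p M using p mu by unfold_locales auto
  show ?thesis
    using W_L2 W_iso W_surj main4[OF Kinf_L2 Kinf_lim] by blast
qed


end
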